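(* For every $k\ge1$ one has $u_{k;0}=b$ and, for all $m\ge0$, $$(b^{m+1}-b+1)\,u_{k;m}=\sum_{j=1}^{m}\binom{m}{j}\Big(\sum_{\substack{0\le a<b\\ a\ne d}}a^j\Big)u_{k;m-j}+\sum_{j=0}^{m}\binom{m}{j}d^j\,u_{k-1;m-j},$$ with the convention $0^0=1$.
   Context: Fix $b\ge2$ and $d\in\{0,\dots,b-1\}$. A string is a finite sequence $X=(d_l,\dots,d_1)$ of digits in $\{0,\dots,b-1\}$ (leading zeros allowed), of length $|X|=l\ge0$; its value is $n(X)=\sum_{i=1}^{l}d_ib^{i-1}$ ($0$ for the empty string). For $k\ge0$, $\mu_k=\sum_{X}b^{-|X|}\delta_{n(X)/b^{|X|}}$, the sum over all strings $X$ containing $d$ exactly $k$ times; it is a finite measure on $[0,1)$ of total mass $b$. The moments are $u_{k;m}=\int_{[0,1)}x^m\,d\mu_k(x)$. *)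

theory Defs
  imports "HOL-Analysis.Analysis"
begin

text \<open>Strings in base b: lists of digits in {0..<b}. A list X = [d_l, ..., d_1]
  (most significant digit first); its value is n(X) = sum_{i=1}^l d_i b^(i-1).\<close>

definition digit_strings :: "nat \<Rightarrow> nat list set" where
  "digit_strings b = {X. set X \<subseteq> {0..<b}}"

definition str_val :: "nat \<Rightarrow> nat list \<Rightarrow> nat" where
  "str_val b X = (\<Sum>i<length X. X ! i * b ^ (length X - 1 - i))"

definition strings_k :: "nat \<Rightarrow> nat \<Rightarrow> nat \<Rightarrow> nat list set" where
  "strings_k b d k = {X \<in> digit_strings b. count_list X d = k}"

text \<open>The moments u_{k;m} = integral of x^m d mu_k(x), where
  mu_k = sum_X b^(-|X|) delta_{n(X)/b^|X|}; for this discrete measure the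
  integral is the (nonnegative, convergent) sum below.\<close>
definition moment :: "nat \<Rightarrow> nat \<Rightarrow> nat \<Rightarrow> nat \<Rightarrow> real" where
  "moment b d k m = (\<Sum>\<^sub>\<infinity>X\<in>strings_k b d k.
      (1 / real b ^ length X) * (real (str_val b X) / real b ^ length X) ^ m)"

end

theory Submission imports Defs begin

lemma str_val_Cons: "str_val b (a#Y) = a * b ^ length Y + str_val b Y"
proof -
  have "str_val b (a#Y) = (\<Sum>i<Suc (length Y). (a#Y) ! i * b ^ (length Y - i))"
    by (simp add: str_val_def)
  also have "\<dots> = a * b ^ length Y + (\<Sum>i<length Y. Y ! i * b ^ (length Y - 1 - i))"
    by (subst sum.lessThan_Suc_shift) simp
  finally show ?thesis by (simp add: str_val_def)
qed

lemma str_val_lt: "set X \<subseteq> {0..<b} \<Longrightarrow> str_val b X < b ^ length X"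
proof (induction X)
  case Nil then show ?case by (simp add: str_val_def)
next
  case (Cons a Y)
  then have "a < b" "str_val b Y < b ^ length Y" by auto
  then have "a * b ^ length Y + str_val b Y < a * b ^ length Y + b ^ length Y" by simp
  also have "\<dots> = (a+1) * b ^ length Y" by simp
  also have "\<dots> \<le> b * b ^ length Y" using \<open>a<b\<close> by (intro mult_right_mono) auto
  finally show ?case by (simp add: str_val_Cons)
qed

definition wt :: "nat \<Rightarrow> nat \<Rightarrow> nat list \<Rightarrow> real" where
  "wt b m X = (1 / real b ^ length X) * (real (str_val b X) / real b ^ length X) ^ m"

lemma moment_wt: "moment b d k m = infsum (wt b m) (strings_k b d k)"
  by (simp add: moment_def wt_def[abs_def])

lemma wt_Cons:
  assumes "b > 0"
  shows "wt b m (a#Y) = (1 / real b ^ (m+1)) * (\<Sum>j=0..m. real (m choose j) * real a ^ j * wt b (m-j) Y)"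
proof -
  let ?n = "length Y" and ?v = "real (str_val b Y)"
  have "real (str_val b (a#Y)) / real b ^ length (a#Y) = (real a + ?v / real b ^ ?n) / real b"
    using assms by (simp add: str_val_Cons field_simps)
  then have "wt b m (a#Y) = (1/real b) * (1/real b^?n) * ((real a + ?v / real b ^ ?n) / real b) ^ m"
    by (simp add: wt_def)
  also have "\<dots> = (1/real b) * (1/real b^?n) * (1/real b^m) * (real a + ?v / real b ^ ?n) ^ m"
    by (simp add: power_divide)
  also have "(real a + ?v / real b ^ ?n) ^ m = (\<Sum>j=0..m. real (m choose j) * real a ^ j * (?v / real b ^ ?n) ^ (m-j))"
    by (simp add: binomial_ring atLeast0AtMost)
  finally show ?thesis
    by (simp add: wt_def sum_distrib_left algebra_simps)
qed

lemma wt_nonneg: "0 \<le> wt b m X"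
  by (simp add: wt_def)

lemma wt_le: assumes "b > 0" "set X \<subseteq> {0..<b}" shows "wt b m X \<le> wt b 0 X"
proof -
  have "real (str_val b X) < real b ^ length X" using str_val_lt[OF assms(2)]
    by (metis of_nat_less_iff of_nat_power)
  then have "real (str_val b X) / real b ^ length X \<le> 1" using assms by simp
  then have "(real (str_val b X) / real b ^ length X) ^ m \<le> 1"
    by (intro power_le_one) auto
  then show ?thesis unfolding wt_def by (simp add: divide_right_mono)
qed


lemma has_sum_UN_finite:
  fixes g :: "'a \<Rightarrow> real"
  assumes "finite A" "disjoint_family_on B A" "\<And>a. a\<in>A \<Longrightarrow> (g has_sum s a) (B a)"
  shows "(g has_sum (\<Sum>a\<in>A. s a)) (\<Union>a\<in>A. B a)"
  using assms
proof (induction A rule: finite_induct)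
  case empty then show ?case by simp
next
  case (insert x F)
  have d: "disjoint_family_on B F"
    using insert.prems(1) unfolding disjoint_family_on_def by blast
  have "(g has_sum (s x + (\<Sum>a\<in>F. s a))) (B x \<union> (\<Union>a\<in>F. B a))"
  proof (rule has_sum_Un_disjoint)
    show "(g has_sum s x) (B x)" using insert.prems by auto
    show "(g has_sum (\<Sum>a\<in>F. s a)) (\<Union>a\<in>F. B a)" using insert d by auto
    show "B x \<inter> (\<Union>a\<in>F. B a) = {}" using insert.prems(1) insert.hyps(2)
      unfolding disjoint_family_on_def by fastforce
  qed
  then show ?case using insert.hyps by simp
qed

lemma has_sum_sum_fun:
  fixes f :: "'i \<Rightarrow> 'a \<Rightarrow> real"
  assumes "finite I" "\<And>i. i\<in>I \<Longrightarrow> (f i has_sum s i) A"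
  shows "((\<lambda>x. \<Sum>i\<in>I. f i x) has_sum (\<Sum>i\<in>I. s i)) A"
  using assms
proof (induction I rule: finite_induct)
  case empty then show ?case by simp
next
  case (insert x F)
  then have "((\<lambda>y. f x y + (\<Sum>i\<in>F. f i y)) has_sum (s x + (\<Sum>i\<in>F. s i))) A"
    by (intro has_sum_add) auto
  then show ?case using insert.hyps by simp
qed

lemma split_has_sum:
  fixes g :: "nat list \<Rightarrow> real"
  assumes "S \<subseteq> digit_strings b" "\<And>a. a<b \<Longrightarrow> ((\<lambda>Y. g (a#Y)) has_sum s a) {Y. a#Y\<in>S}"
  shows "(g has_sum (\<Sum>a<b. s a)) (S - {[]})"
proof -
  have eq: "S - {[]} = (\<Union>a\<in>{..<b}. Cons a ` {Y. a#Y\<in>S})"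
  proof
    show "S - {[]} \<subseteq> (\<Union>a\<in>{..<b}. Cons a ` {Y. a#Y\<in>S})"
    proof
      fix X assume X: "X \<in> S - {[]}"
      then obtain a Y where XY: "X = a#Y" by (cases X) auto
      then have "a < b" using X assms(1) by (auto simp: digit_strings_def)
      then show "X \<in> (\<Union>a\<in>{..<b}. Cons a ` {Y. a#Y\<in>S})" using X XY by auto
    qed
  qed auto
  have "(g has_sum (\<Sum>a<b. s a)) (\<Union>a\<in>{..<b}. Cons a ` {Y. a#Y\<in>S})"
  proof (rule has_sum_UN_finite)
    show "disjoint_family_on (\<lambda>a. Cons a ` {Y. a#Y\<in>S}) {..<b}"
      unfolding disjoint_family_on_def by auto
    fix a assume "a \<in> {..<b}"
    then have "((\<lambda>Y. g (a#Y)) has_sum s a) {Y. a#Y\<in>S}" using assms(2) by auto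
    then show "(g has_sum s a) (Cons a ` {Y. a#Y\<in>S})"
      by (subst has_sum_reindex) (auto simp: o_def)
  qed auto
  then show ?thesis using eq by simp
qed

lemma strings_Cons:
  assumes "a < b"
  shows "{Y. a#Y \<in> strings_k b d k} =
    (if a = d then (if k = 0 then {} else strings_k b d (k-1)) else strings_k b d k)"
  using assms by (cases k) (auto simp: strings_k_def digit_strings_def)

lemma strings_sub: "strings_k b d k \<subseteq> digit_strings b"
  by (auto simp: strings_k_def)

lemma wt_Cons0: "b > 0 \<Longrightarrow> wt b 0 (a#Y) = wt b 0 Y / real b"
  by (simp add: wt_Cons)

lemma wt_Nil: "wt b m [] = 0 ^ m"
  by (simp add: wt_def str_val_def)


lemma finite_T: "finite {X \<in> strings_k b d k. length X < L}"
proof (rule finite_subset)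
  show "{X \<in> strings_k b d k. length X < L} \<subseteq> {xs. set xs \<subseteq> {0..<b} \<and> length xs \<le> L}"
    by (auto simp: strings_k_def digit_strings_def)
  show "finite {xs. set xs \<subseteq> {0..<b} \<and> length xs \<le> L}"
    by (rule finite_lists_length_le) simp
qed

lemma T_bound:
  assumes "b \<ge> 2" "d < b"
  shows "sum (wt b 0) {X \<in> strings_k b d k. length X < L} \<le> real b"
proof (induction L arbitrary: k)
  case 0 then show ?case by simp
next
  case (Suc L)
  define S where "S = {X \<in> strings_k b d k. length X < Suc L}"
  have fS: "finite S" unfolding S_def by (rule finite_T)
  define s where "s a = sum (\<lambda>Y. wt b 0 (a#Y)) {Y. a#Y \<in> S}" for a
  have "(wt b 0 has_sum (\<Sum>a<b. s a)) (S - {[]})"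
  proof (rule split_has_sum)
    show "S \<subseteq> digit_strings b" unfolding S_def using strings_sub by blast
    fix a assume "a < b"
    have "finite {Y. a#Y \<in> S}"
      by (rule finite_subset[OF _ finite_imageI[OF fS, of tl]]) force
    then show "((\<lambda>Y. wt b 0 (a#Y)) has_sum s a) {Y. a#Y \<in> S}"
      unfolding s_def by (rule has_sum_finite)
  qed
  then have e1: "sum (wt b 0) (S - {[]}) = (\<Sum>a<b. s a)"
    using fS by (metis finite_Diff has_sum_finite has_sum_unique)
  have sb: "s a \<le> (if a = d \<and> k = 0 then 0 else 1)" if "a < b" for a
  proof -
    have "{Y. a#Y \<in> S} = {Y \<in> {Y. a#Y \<in> strings_k b d k}. length Y < L}"
      unfolding S_def by auto
    also have "\<dots> = (if a = d then (if k = 0 then {} else {Y \<in> strings_k b d (k-1). length Y < L})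
                      else {Y \<in> strings_k b d k. length Y < L})"
      using strings_Cons[OF that] by simp
    finally have E: "{Y. a#Y \<in> S} = \<dots>" .
    have s': "s a = sum (wt b 0) {Y. a#Y \<in> S} / real b"
      unfolding s_def using assms by (simp add: wt_Cons0 sum_divide_distrib)
    show ?thesis
    proof (cases "a = d \<and> k = 0")
      case True then show ?thesis using s' E by simp
    next
      case False
      then obtain k' where "sum (wt b 0) {Y. a#Y \<in> S} = sum (wt b 0) {Y \<in> strings_k b d k'. length Y < L}"
        using E by (cases "a = d") auto
      then have "sum (wt b 0) {Y. a#Y \<in> S} \<le> real b" using Suc.IH by simp
      then have "s a \<le> 1" using s' assms by (simp add: divide_le_eq)
      then show ?thesis using False by auto
    qed
  qed
  have sum_if: "(\<Sum>a<b. (if a = d \<and> k = 0 then 0 else 1::real)) = real b - (if k = 0 then 1 else 0)"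
  proof (cases "k = 0")
    case True
    have "(\<Sum>a<b. (if a = d then 0 else 1::real)) = (\<Sum>a\<in>{..<b} - {d}. 1)"
      by (rule sum.mono_neutral_cong_right) auto
    also have "\<dots> = real b - 1" using assms by simp
    finally show ?thesis using True by simp
  qed simp
  have "sum (wt b 0) S = (if [] \<in> S then wt b 0 [] else 0) + sum (wt b 0) (S - {[]})"
    using fS by (cases "[] \<in> S") (auto simp: sum.remove)
  also have "\<dots> \<le> (if k = 0 then 1 else 0) + (\<Sum>a<b. (if a = d \<and> k = 0 then 0 else 1::real))"
    unfolding e1
    by (intro add_mono sum_mono) (auto simp: S_def strings_k_def digit_strings_def wt_Nil sb)
  also have "\<dots> = real b" using sum_if by simp
  finally show ?case unfolding S_def .
qed

lemma summable_wt0: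
  assumes "b \<ge> 2" "d < b"
  shows "wt b 0 summable_on strings_k b d k"
proof (rule nonneg_bdd_above_summable_on)
  show "bdd_above (sum (wt b 0) ` {F. F \<subseteq> strings_k b d k \<and> finite F})"
  proof (rule bdd_aboveI)
    fix x assume "x \<in> sum (wt b 0) ` {F. F \<subseteq> strings_k b d k \<and> finite F}"
    then obtain F where F: "F \<subseteq> strings_k b d k" "finite F" "x = sum (wt b 0) F" by auto
    define L where "L = Suc (\<Sum>X\<in>F. length X)"
    have "F \<subseteq> {X \<in> strings_k b d k. length X < L}"
      using F unfolding L_def by (auto intro: member_le_sum le_imp_less_Suc)
    then have "sum (wt b 0) F \<le> sum (wt b 0) {X \<in> strings_k b d k. length X < L}"
      by (intro sum_mono2 finite_T) (auto simp: wt_nonneg)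
    also have "\<dots> \<le> real b" by (rule T_bound[OF assms])
    finally show "x \<le> real b" using F by simp
  qed
qed (simp add: wt_nonneg)

lemma summable_wt:
  assumes "b \<ge> 2" "d < b"
  shows "wt b m summable_on strings_k b d k"
  by (rule summable_on_comparison_test[OF summable_wt0[OF assms]])
    (use assms in \<open>auto simp: wt_nonneg strings_k_def digit_strings_def intro!: wt_le\<close>)


lemma decomp:
  assumes "b \<ge> 2" "d < b"
  shows "(wt b m has_sum (\<Sum>a<b. (1/real b^(m+1)) * (\<Sum>j=0..m. real (m choose j) * real a^j *
            infsum (wt b (m-j)) {Y. a#Y \<in> strings_k b d k}))) (strings_k b d k - {[]})"
proof (rule split_has_sum[OF strings_sub])
  fix a assume a: "a < b"
  have sm: "wt b i summable_on {Y. a#Y \<in> strings_k b d k}" for i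
    using strings_Cons[OF a, of d k] summable_wt[OF assms] by (auto split: if_splits)
  have "((\<lambda>Y. (1/real b^(m+1)) * (\<Sum>j=0..m. real (m choose j) * real a^j * wt b (m-j) Y)) has_sum
         ((1/real b^(m+1)) * (\<Sum>j=0..m. real (m choose j) * real a^j *
            infsum (wt b (m-j)) {Y. a#Y \<in> strings_k b d k}))) {Y. a#Y \<in> strings_k b d k}"
    using sm by (intro has_sum_cmult_right has_sum_sum_fun) auto
  then show "((\<lambda>Y. wt b m (a#Y)) has_sum ((1/real b^(m+1)) * (\<Sum>j=0..m. real (m choose j) * real a^j *
            infsum (wt b (m-j)) {Y. a#Y \<in> strings_k b d k}))) {Y. a#Y \<in> strings_k b d k}"
    using assms by (simp only: wt_Cons[of b m a])
qed


lemma recur: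
  assumes "b \<ge> 2" "d < b" "k \<ge> 1"
  shows "(real b ^ (m + 1) - real b + 1) * moment b d k m =
       (\<Sum>j=1..m. real (m choose j) * (\<Sum>a\<in>{0..<b} - {d}. real a ^ j) * moment b d k (m - j))
     + (\<Sum>j=0..m. real (m choose j) * real d ^ j * moment b d (k - 1) (m - j))"
proof -
  define u where "u i = moment b d k i" for i
  define v where "v i = moment b d (k-1) i" for i
  define F where "F a = (\<Sum>j=0..m. real (m choose j) * real a^j * (if a = d then v (m-j) else u (m-j)))" for a
  define A where "A = {0..<b} - {d}"
  have nil: "strings_k b d k - {[]} = strings_k b d k"
    using assms by (auto simp: strings_k_def)
  have inner: "infsum (wt b i) {Y. a#Y \<in> strings_k b d k} = (if a = d then v i else u i)"
    if "a < b" for a i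
    using strings_Cons[OF that, of d k] assms by (simp add: u_def v_def moment_wt)
  have "moment b d k m = (\<Sum>a<b. (1/real b^(m+1)) * (\<Sum>j=0..m. real (m choose j) * real a^j *
            infsum (wt b (m-j)) {Y. a#Y \<in> strings_k b d k}))"
    using decomp[OF assms(1,2), of m k] nil by (simp add: moment_wt infsumI)
  also have "\<dots> = (\<Sum>a<b. (1/real b^(m+1)) * F a)"
    by (intro sum.cong refl) (simp add: F_def inner)
  finally have "real b^(m+1) * u m = (\<Sum>a<b. F a)"
    using assms by (simp add: u_def sum_divide_distrib[symmetric])
  also have "\<dots> = F d + (\<Sum>a\<in>A. F a)"
    unfolding A_def using assms by (simp add: atLeast0LessThan sum.remove)
  also have "F d = (\<Sum>j=0..m. real (m choose j) * real d ^ j * v (m - j))"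
    by (simp add: F_def)
  also have "(\<Sum>a\<in>A. F a) = (\<Sum>a\<in>A. u m + (\<Sum>j=1..m. real (m choose j) * real a^j * u (m-j)))"
  proof (intro sum.cong refl)
    fix a assume "a \<in> A"
    then have "a \<noteq> d" by (simp add: A_def)
    then show "F a = u m + (\<Sum>j=1..m. real (m choose j) * real a^j * u (m-j))"
      unfolding F_def by (simp add: sum.atLeast_Suc_atMost)
  qed
  also have "\<dots> = real (card A) * u m + (\<Sum>j=1..m. real (m choose j) * (\<Sum>a\<in>A. real a ^ j) * u (m - j))"
    by (simp add: sum.distrib sum.swap[of _ A] sum_distrib_left sum_distrib_right mult_ac)
  also have "real (card A) = real b - 1"
    using assms by (simp add: A_def)
  finally show ?thesis unfolding u_def v_def A_def by (simp add: algebra_simps)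
qed


lemma u00:
  assumes "b \<ge> 2" "d < b"
  shows "moment b d 0 0 = real b"
proof -
  define U where "U = moment b d 0 0"
  define S where "S = strings_k b d 0"
  have inner: "infsum (wt b 0) {Y. a#Y \<in> S} = (if a = d then 0 else U)" if "a < b" for a
    using strings_Cons[OF that, of d 0] by (simp add: U_def S_def moment_wt)
  have h: "(wt b 0 has_sum (\<Sum>a<b. (1/real b) * (if a = d then 0 else U))) (S - {[]})"
    using decomp[OF assms, of 0 0] unfolding S_def[symmetric] by (simp add: inner)
  have "[] \<in> S" by (simp add: S_def strings_k_def digit_strings_def)
  then have "S = insert [] (S - {[]})" by auto
  with has_sum_insert[OF _ h, of "[]"] have "(wt b 0 has_sum (1 + (\<Sum>a<b. (1/real b) * (if a = d then 0 else U)))) S"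
    by (simp add: wt_Nil)
  then have e: "U = 1 + (\<Sum>a<b. (1/real b) * (if a = d then 0 else U))"
    by (simp add: U_def S_def moment_wt infsumI)
  have "(\<Sum>a<b. (1/real b) * (if a = d then 0 else U)) = (\<Sum>a\<in>{..<b} - {d}. (1/real b) * U)"
    by (rule sum.mono_neutral_cong_right) auto
  also have "\<dots> = (real b - 1) / real b * U" using assms by simp
  finally have "U = 1 + (real b - 1) / real b * U" using e by simp
  then have "real b * U = real b + (real b - 1) * U" using assms by (simp add: field_simps)
  then show ?thesis unfolding U_def by (simp add: algebra_simps)
qed

lemma mom0:
  assumes "b \<ge> 2" "d < b"
  shows "moment b d k 0 = real b"
proof (induction k)
  case 0 then show ?case using u00[OF assms] by simp
next
  case (Suc k)
  have "(real b ^ (0 + 1) - real b + 1) * moment b d (Suc k) 0 = moment b d k 0"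
    using recur[OF assms, of "Suc k" 0] by simp
  then show ?case using Suc by simp
qed

theorem mainTheorem10:
  fixes b d k :: nat
  assumes "b \<ge> 2" and "d < b" and "k \<ge> 1"
  shows "moment b d k 0 = real b \<and>
    (\<forall>m::nat. (real b ^ (m + 1) - real b + 1) * moment b d k m =
       (\<Sum>j=1..m. real (m choose j) * (\<Sum>a\<in>{0..<b} - {d}. real a ^ j) * moment b d k (m - j))
     + (\<Sum>j=0..m. real (m choose j) * real d ^ j * moment b d (k - 1) (m - j)))"
  using mom0[OF assms(1,2)] recur[OF assms] by blast

end
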